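(* Let $A_1,\ldots,A_n$ be events in a probability space, let $X$ be the number of these events that occur, and for $1\le j\le n$ let $S_j=\sum_{1\le i_1<\cdots<i_j\le n}P(A_{i_1}\cdots A_{i_j})$. Let $k$ be an integer with $1\le k<n$. For distinct indices $i_1,\ldots,i_k\in\{1,\ldots,n\}$ and $1\le s\le n-k$, let $W_s(i_1,\ldots,i_k)$ be the $s$-th largest of the $n-k$ values $P(A_{i_1}\cdots A_{i_k}A_j)$, $j\in\{1,\ldots,n\}\setminus\{i_1,\ldots,i_k\}$ (counted with multiplicity). Let $$V=\sum_{1\le r_1<\cdots<r_k\le n}\ \sum_{s=1}^{n-k}W_s(r_1,\ldots,r_k)\frac{k}{(k+s)(k+s-1)}.$$ If $k$ is even then $P(X\ge 1)\ge\sum_{j=1}^{k}(-1)^{j+1}S_j+V$, and if $k$ is odd then $P(X\ge 1)\le\sum_{j=1}^{k}(-1)^{j+1}S_j-V$.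
   Context: $A_{i_1}\cdots A_{i_j}$ denotes the intersection of the events. *)

theory Defs
  imports "HOL-Probability.Probability"
begin

definition inter_ev :: "(nat \<Rightarrow> 'a set) \<Rightarrow> nat set \<Rightarrow> 'a set" where
  "inter_ev A I = (\<Inter>i\<in>I. A i)"

definition S_sum :: "'a measure \<Rightarrow> (nat \<Rightarrow> 'a set) \<Rightarrow> nat \<Rightarrow> nat \<Rightarrow> real" where
  "S_sum M A n j = (\<Sum>J\<in>{J. J \<subseteq> {1..n} \<and> card J = j}. measure M (inter_ev A J))"

definition num_occ :: "(nat \<Rightarrow> 'a set) \<Rightarrow> nat \<Rightarrow> 'a \<Rightarrow> nat" where
  "num_occ A n w = card {i\<in>{1..n}. w \<in> A i}"

definition W_val :: "'a measure \<Rightarrow> (nat \<Rightarrow> 'a set) \<Rightarrow> nat \<Rightarrow> nat set \<Rightarrow> nat \<Rightarrow> real" where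
  "W_val M A n I s =
     rev (sort (map (\<lambda>j. measure M (inter_ev A I \<inter> A j)) (sorted_list_of_set ({1..n} - I)))) ! (s - 1)"

definition V_val :: "'a measure \<Rightarrow> (nat \<Rightarrow> 'a set) \<Rightarrow> nat \<Rightarrow> nat \<Rightarrow> real" where
  "V_val M A n k = (\<Sum>R\<in>{R. R \<subseteq> {1..n} \<and> card R = k}.
      \<Sum>s=1..n-k. W_val M A n R s * (real k / ((real k + real s) * (real k + real s - 1))))"

end

theory Submission
  imports Defs
begin


definition cw :: "nat \<Rightarrow> nat \<Rightarrow> real" where
  "cw k s = real k / ((real k + real s) * (real k + real s - 1))"

lemma cw_sum: assumes "1 \<le> k" shows "(\<Sum>s=1..t. cw k s) = real t / (real k + real t)"
proof (induction t)
  case 0 then show ?case by simp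
next
  case (Suc t)
  have "(\<Sum>s=1..Suc t. cw k s) = real t / (real k + real t) + cw k (Suc t)"
    using Suc by simp
  also have "\<dots> = real (Suc t) / (real k + real (Suc t))"
  proof -
    define a where "a = real k + real t"
    have a: "a > 0" using assms a_def by simp
    have "cw k (Suc t) = real k / ((a + 1) * a)" unfolding cw_def a_def by simp
    moreover have "real (Suc t) / (real k + real (Suc t)) = (real t + 1) / (a + 1)" unfolding a_def by (simp add: algebra_simps)
    moreover have "real t / a + real k / ((a + 1) * a) = (real t + 1) / (a + 1)"
    proof -
      have eq: "real t * (a+1) + real k = (real t + 1) * a" unfolding a_def by (simp add: algebra_simps)
      have "real t / a + real k / ((a + 1) * a) = (real t * (a+1) + real k) / ((a+1) * a)"
      proof -
        have "real t * (a+1) / ((a+1)*a) = real t / a" using a by simp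
        then show ?thesis by (simp add: add_divide_distrib)
      qed
      also have "\<dots> = (real t + 1) / (a + 1)" using a unfolding eq by simp
      finally show ?thesis .
    qed
    ultimately show ?thesis using a_def by simp
  qed
  finally show ?case .
qed

lemma cw_nonneg: "1 \<le> k \<Longrightarrow> 0 \<le> cw k s"
  unfolding cw_def by (auto intro!: divide_nonneg_pos)

lemma cw_mono: assumes "1 \<le> k" "1 \<le> s" "s \<le> s'" shows "cw k s' \<le> cw k s"
  unfolding cw_def using assms
  by (intro divide_left_mono mult_mono mult_pos_pos) auto

lemma sub_sum:
  assumes "1 \<le> k"
  shows "S \<subseteq> {1..N} \<Longrightarrow> card S \<le> t \<Longrightarrow> sum (cw k) S \<le> sum (cw k) {1..t}"
proof (induction N arbitrary: S t)
  case 0 then show ?case using cw_nonneg[OF assms] by (auto intro: sum_nonneg)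
next
  case (Suc N)
  show ?case
  proof (cases "Suc N \<in> S")
    case False
    then have "S \<subseteq> {1..N}" using Suc.prems(1) by (fastforce simp: subset_iff le_Suc_eq)
    then show ?thesis using Suc by blast
  next
    case True
    have fin: "finite S" using Suc.prems finite_subset by blast
    show ?thesis
    proof (cases "t \<le> Suc N")
      case le: True
      have "0 < card S" using True fin by (auto simp: card_gt_0_iff)
      then have t1: "1 \<le> t" using Suc.prems(2) by linarith
      have S': "S - {Suc N} \<subseteq> {1..N}" "card (S - {Suc N}) \<le> t - 1"
        using Suc.prems True fin by auto
      have "sum (cw k) S = sum (cw k) (S - {Suc N}) + cw k (Suc N)"
        using True fin by (simp add: sum.remove)
      also have "\<dots> \<le> sum (cw k) {1..t-1} + cw k t"
        using Suc.IH[OF S'] cw_mono[OF assms t1 le] by linarith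
      also have "\<dots> = sum (cw k) {1..t}"
        using t1 by (cases t) (auto simp: add.commute)
      finally show ?thesis .
    next
      case False
      have "sum (cw k) S \<le> sum (cw k) {1..Suc N}"
        using Suc.prems cw_nonneg[OF assms] by (intro sum_mono2) auto
      also have "\<dots> \<le> sum (cw k) {1..t}"
        using False cw_nonneg[OF assms] by (intro sum_mono2) auto
      finally show ?thesis .
    qed
  qed
qed

lemma alt_sum: assumes "1 \<le> m"
  shows "(\<Sum>j=1..k. (-1) ^ (j + 1) * real (m choose j)) = 1 - (-1)^k * real ((m-1) choose k)"
proof (induction k)
  case 0 then show ?case by simp
next
  case (Suc k)
  have e: "(m choose (Suc k)) = ((m-1) choose (Suc k)) + ((m-1) choose k)"
    using assms by (cases m) auto
  show ?case using Suc by (simp add: e algebra_simps)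
qed



lemma ev_sets:
  assumes "\<forall>i\<in>{1..n}. A i \<in> sets M" "J \<subseteq> {1..n}" "J \<noteq> {}"
  shows "inter_ev A J \<in> sets M"
proof -
  have f: "finite J" using assms(2) finite_subset by blast
  have "\<forall>i\<in>J. A i \<in> sets M" using assms(1,2) by blast
  then show ?thesis unfolding inter_ev_def using sets.finite_INT[OF f assms(3)] by blast
qed

lemma ind_ev:
  assumes "J \<subseteq> {1..n}" "J \<noteq> {}"
  shows "indicator (inter_ev A J) w = (if J \<subseteq> {i\<in>{1..n}. w \<in> A i} then 1 else (0::real))"
  using assms unfolding inter_ev_def by (auto simp: indicator_def)

lemma meas_m:
  assumes "\<forall>i\<in>{1..n}. A i \<in> sets M"
  shows "(\<lambda>w. num_occ A n w) \<in> measurable M (count_space UNIV)"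
  unfolding num_occ_def
  apply (rule measurable_card[where S="\<lambda>w. {i\<in>{1..n}. w \<in> A i}"])
  subgoal for j
  proof (cases "j \<in> {1..n}")
    case True
    then have Ai: "A j \<in> sets M" using assms by blast
    have "A j \<subseteq> space M" using Ai by (rule sets.sets_into_space)
    then have e: "{x \<in> space M. j \<in> {i \<in> {1..n}. x \<in> A i}} = A j" using True by auto
    show ?thesis unfolding e by (rule Ai)
  next
    case False
    then have e: "{x \<in> space M. j \<in> {i \<in> {1..n}. x \<in> A i}} = {}" by auto
    show ?thesis unfolding e by (rule sets.empty_sets)
  qed
  done

lemma meas_g:
  assumes "\<forall>i\<in>{1..n}. A i \<in> sets M"
  shows "(\<lambda>w. g (num_occ A n w) :: real) \<in> borel_measurable M"
  using measurable_compose[OF meas_m[OF assms], of g borel] by simp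

lemma num_occ_le: "num_occ A n w \<le> n"
  unfolding num_occ_def by (rule order.trans[OF card_mono[of "{1..n}"]]) auto

lemma bound_g: "\<bar>g (num_occ A n w) :: real\<bar> \<le> (\<Sum>t\<le>n. \<bar>g t\<bar>)"
  using num_occ_le[of A n w] by (intro member_le_sum[where f="\<lambda>t. \<bar>g t\<bar>"]) auto

lemma integrable_g:
  assumes "prob_space M" "\<forall>i\<in>{1..n}. A i \<in> sets M"
  shows "integrable M (\<lambda>w. g (num_occ A n w) :: real)"
proof -
  interpret prob_space M by fact
  have "AE x in M. norm (g (num_occ A n x)) \<le> (\<Sum>t\<le>n. \<bar>g t\<bar>)"
    by (rule AE_I2) (simp add: bound_g)
  then show ?thesis
    by (rule integrable_const_bound) (rule meas_g[OF assms(2)])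
qed

lemma integrable_ig:
  assumes "prob_space M" "\<forall>i\<in>{1..n}. A i \<in> sets M" "X \<in> sets M"
  shows "integrable M (\<lambda>w. indicator X w * g (num_occ A n w) :: real)"
proof -
  interpret prob_space M by fact
  have b: "norm (indicator X w * g (num_occ A n w)) \<le> (\<Sum>t\<le>n. \<bar>g t\<bar>)" for w
    using bound_g[of g A n w] by (simp add: indicator_def)
  have m: "(\<lambda>w. indicator X w * g (num_occ A n w) :: real) \<in> borel_measurable M"
    by (intro borel_measurable_times borel_measurable_indicator assms(3) meas_g[OF assms(2)])
  have "AE x in M. norm (indicator X x * g (num_occ A n x)) \<le> (\<Sum>t\<le>n. \<bar>g t\<bar>)"
    by (rule AE_I2) (rule b)
  then show ?thesis
    by (rule integrable_const_bound) (rule m)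
qed

lemma sum_ind:
  assumes "\<forall>i\<in>{1..n}. A i \<in> sets M" "1 \<le> j"
  shows "(\<Sum>J\<in>{J. J \<subseteq> {1..n} \<and> card J = j}. indicator (inter_ev A J) w * (c::real))
         = real (num_occ A n w choose j) * c"
proof -
  let ?T = "{i\<in>{1..n}. w \<in> A i}"
  let ?Js = "{J. J \<subseteq> {1..n} \<and> card J = j}"
  have fin: "finite ?Js" by (rule finite_subset[of _ "Pow {1..n}"]) auto
  have "(\<Sum>J\<in>?Js. indicator (inter_ev A J) w * c) = (\<Sum>J\<in>?Js. (if J \<subseteq> ?T then c else 0))"
  proof (rule sum.cong)
    fix J assume "J \<in> ?Js"
    then have "J \<subseteq> {1..n}" "J \<noteq> {}" using assms(2) by auto
    then show "indicator (inter_ev A J) w * c = (if J \<subseteq> ?T then c else 0)"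
      by (simp add: ind_ev)
  qed simp
  also have "\<dots> = real (card {J\<in>?Js. J \<subseteq> ?T}) * c"
    using fin by (simp add: sum.inter_filter[symmetric])
  also have "{J\<in>?Js. J \<subseteq> ?T} = {J. J \<subseteq> ?T \<and> card J = j}" by auto
  also have "card \<dots> = card ?T choose j" by (rule n_subsets) simp
  finally show ?thesis unfolding num_occ_def .
qed

lemma S_int:
  assumes "prob_space M" "\<forall>i\<in>{1..n}. A i \<in> sets M" "1 \<le> j"
  shows "S_sum M A n j = integral\<^sup>L M (\<lambda>w. real (num_occ A n w choose j))"
proof -
  interpret prob_space M by fact
  let ?Js = "{J. J \<subseteq> {1..n} \<and> card J = j}"
  have sets: "inter_ev A J \<in> sets M" if "J \<in> ?Js" for J
  proof -
    have "J \<subseteq> {1..n}" "J \<noteq> {}" using that assms(3) by auto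
    then show ?thesis by (rule ev_sets[OF assms(2)])
  qed
  have intg: "integrable M (indicator (inter_ev A J) :: 'a \<Rightarrow> real)" if "J \<in> ?Js" for J
    by (rule integrable_real_indicator[OF sets[OF that]]) (simp add: less_top[symmetric])
  have "S_sum M A n j = (\<Sum>J\<in>?Js. integral\<^sup>L M (\<lambda>w. indicator (inter_ev A J) w * 1))"
    unfolding S_sum_def
  proof (rule sum.cong)
    fix J assume "J \<in> ?Js"
    then have "inter_ev A J \<inter> space M = inter_ev A J" using sets sets.Int_space_eq2 by blast
    then show "measure M (inter_ev A J) = integral\<^sup>L M (\<lambda>w. indicator (inter_ev A J) w * 1)"
      by simp
  qed simp
  also have "\<dots> = integral\<^sup>L M (\<lambda>w. \<Sum>J\<in>?Js. indicator (inter_ev A J) w * 1)"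
    by (rule Bochner_Integration.integral_sum[symmetric, where I="?Js" and f="\<lambda>J w. indicator (inter_ev A J) w * (1::real)"]) (simp add: intg)
  also have "\<dots> = integral\<^sup>L M (\<lambda>w. real (num_occ A n w choose j))"
    using sum_ind[OF assms(2,3), where c=1] by simp
  finally show ?thesis .
qed



lemma meas_ind_mult:
  assumes "prob_space M" "X \<in> sets M"
  shows "integral\<^sup>L M (\<lambda>w. indicator X w * (c::real)) = measure M X * c"
proof -
  have "X \<inter> space M = X" using assms(2) sets.Int_space_eq2 by blast
  then show ?thesis by (simp only: integral_mult_left_zero Bochner_Integration.integral_indicator)
qed

lemma intg_ind_mult:
  assumes "prob_space M" "X \<in> sets M"
  shows "integrable M (\<lambda>w. indicator X w * (c::real))"
proof -
  interpret prob_space M by fact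
  have "integrable M (indicator X :: 'a \<Rightarrow> real)"
    by (rule integrable_real_indicator[OF assms(2)]) (simp add: less_top[symmetric])
  then show ?thesis by (rule integrable_mult_left)
qed

lemma R_bound:
  assumes PS: "prob_space M" and As: "\<forall>i\<in>{1..n}. A i \<in> sets M" and k1: "1 \<le> k"
    and R: "R \<subseteq> {1..n}" "card R = k"
  shows "(\<Sum>s=1..n-k. W_val M A n R s * cw k s)
         \<le> integral\<^sup>L M (\<lambda>w. indicator (inter_ev A R) w * sum (cw k) {1..num_occ A n w - k})"
proof -
  have Rne: "R \<noteq> {}" using R k1 by auto
  have finR: "finite R" using R finite_subset by blast
  define C where "C = {1..n} - R"
  define N where "N = n - k"
  define xs where "xs = sorted_list_of_set C"
  define p where "p j = measure M (inter_ev A R \<inter> A j)" for j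
  define ys where "ys = map p xs"
  define L where "L = rev (sort ys)"
  have finC: "finite C" unfolding C_def by simp
  have lxs: "length xs = N" unfolding xs_def N_def C_def
    using R finR by (simp add: card_Diff_subset)
  have dxs: "distinct xs" unfolding xs_def by simp
  have sxs: "set xs = C" unfolding xs_def using finC by simp
  have lys: "length ys = N" unfolding ys_def using lxs by simp
  have W: "W_val M A n R s = L ! (s - 1)" for s
    unfolding W_val_def L_def ys_def xs_def p_def C_def by simp
  have "mset L = mset ys" unfolding L_def by simp
  then obtain \<pi> where pi: "\<pi> permutes {..<length ys}" "permute_list \<pi> ys = L"
    by (rule mset_eq_permutation)
  define \<sigma> where "\<sigma> s = xs ! \<pi> (s - 1)" for s
  have pi_lt: "i < N \<Longrightarrow> \<pi> i < N" for i
    using permutes_in_image[OF pi(1)] lys by auto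
  have Lnth: "L ! (s - 1) = p (\<sigma> s)" if "s \<in> {1..N}" for s
  proof -
    have "s - 1 < N" using that by auto
    then have "L ! (s - 1) = ys ! \<pi> (s - 1)"
      using permute_list_nth[OF pi(1)] pi(2) lys by metis
    also have "\<dots> = p (\<sigma> s)" unfolding ys_def \<sigma>_def using pi_lt[OF \<open>s - 1 < N\<close>] lxs by simp
    finally show ?thesis .
  qed
  have sig_in: "\<sigma> s \<in> C" if "s \<in> {1..N}" for s
  proof -
    have "s - 1 < N" using that by auto
    then show ?thesis unfolding \<sigma>_def using pi_lt lxs sxs nth_mem by metis
  qed
  have sig_inj: "inj_on \<sigma> {1..N}"
  proof (rule inj_onI)
    fix s s' assume s: "s \<in> {1..N}" "s' \<in> {1..N}" "\<sigma> s = \<sigma> s'"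
    then have "\<pi> (s - 1) = \<pi> (s' - 1)"
      unfolding \<sigma>_def using nth_eq_iff_index_eq[OF dxs] pi_lt lxs
      by (metis atLeastAtMost_iff diff_less less_le_trans zero_less_one)
    then have "s - 1 = s' - 1" using permutes_inj[OF pi(1)] by (simp add: inj_eq)
    then show "s = s'" using s by auto
  qed
  define E where "E s = inter_ev A R \<inter> A (\<sigma> s)" for s
  have Esets: "E s \<in> sets M" if "s \<in> {1..N}" for s
  proof -
    have "\<sigma> s \<in> {1..n}" using sig_in[OF that] unfolding C_def by blast
    then have "A (\<sigma> s) \<in> sets M" using As by blast
    then show ?thesis unfolding E_def using ev_sets[OF As R(1) Rne] by (rule_tac sets.Int)
  qed
  have "(\<Sum>s=1..n-k. W_val M A n R s * cw k s) = (\<Sum>s\<in>{1..N}. integral\<^sup>L M (\<lambda>w. indicator (E s) w * cw k s))"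
    unfolding N_def[symmetric]
  proof (rule sum.cong[OF refl])
    fix s assume s: "s \<in> {1..N}"
    show "W_val M A n R s * cw k s = integral\<^sup>L M (\<lambda>w. indicator (E s) w * cw k s)"
    proof -
      have "integral\<^sup>L M (\<lambda>w. indicator (E s) w * cw k s) = measure M (E s) * cw k s"
        by (rule meas_ind_mult[OF PS Esets[OF s]])
      moreover have "W_val M A n R s = p (\<sigma> s)" using W Lnth[OF s] by simp
      moreover have "p (\<sigma> s) = measure M (E s)" unfolding p_def E_def ..
      ultimately show ?thesis by metis
    qed
  qed
  also have "\<dots> = integral\<^sup>L M (\<lambda>w. \<Sum>s\<in>{1..N}. indicator (E s) w * cw k s)"
    by (rule Bochner_Integration.integral_sum[symmetric, where I="{1..N}" and f="\<lambda>s w. indicator (E s) w * cw k s"])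
       (rule intg_ind_mult[OF PS Esets])
  also have "\<dots> \<le> integral\<^sup>L M (\<lambda>w. indicator (inter_ev A R) w * sum (cw k) {1..num_occ A n w - k})"
  proof (rule integral_mono)
    show "integrable M (\<lambda>w. \<Sum>s\<in>{1..N}. indicator (E s) w * cw k s)"
      by (rule Bochner_Integration.integrable_sum) (rule intg_ind_mult[OF PS Esets])
    show "integrable M (\<lambda>w. indicator (inter_ev A R) w * sum (cw k) {1..num_occ A n w - k})"
      by (rule integrable_ig[OF PS As ev_sets[OF As R(1) Rne]])
    fix w assume "w \<in> space M"
    show "(\<Sum>s\<in>{1..N}. indicator (E s) w * cw k s)
          \<le> indicator (inter_ev A R) w * sum (cw k) {1..num_occ A n w - k}"
    proof (cases "w \<in> inter_ev A R")
      case False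
      then have "indicator (E s) w = (0::real)" for s unfolding E_def by simp
      then show ?thesis using False by simp
    next
      case True
      define T where "T = {i\<in>{1..n}. w \<in> A i}"
      have RT: "R \<subseteq> T" using True R unfolding T_def inter_ev_def by auto
      have finT: "finite T" unfolding T_def by simp
      have m: "num_occ A n w = card T" unfolding num_occ_def T_def ..
      define SS where "SS = {s\<in>{1..N}. \<sigma> s \<in> T}"
      have ind: "indicator (E s) w = (if \<sigma> s \<in> T then 1 else (0::real))" if "s \<in> {1..N}" for s
        using True sig_in[OF that] unfolding E_def T_def C_def by (auto simp: indicator_def)
      have "(\<Sum>s\<in>{1..N}. indicator (E s) w * cw k s) = (\<Sum>s\<in>{1..N}. if \<sigma> s \<in> T then cw k s else 0)"
        by (rule sum.cong[OF refl]) (simp add: ind)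
      also have "\<dots> = sum (cw k) SS" unfolding SS_def by (simp add: sum.inter_filter[symmetric])
      also have "\<dots> \<le> sum (cw k) {1..num_occ A n w - k}"
      proof (rule sub_sum[OF k1])
        show "SS \<subseteq> {1..N}" unfolding SS_def by blast
        have "card SS = card (\<sigma> ` SS)"
          by (rule card_image[symmetric]) (rule inj_on_subset[OF sig_inj], auto simp: SS_def)
        also have "\<dots> \<le> card (T - R)"
          by (rule card_mono) (use finT sig_in C_def in \<open>auto simp: SS_def\<close>)
        also have "\<dots> = num_occ A n w - k" using card_Diff_subset[OF finR RT] m R by simp
        finally show "card SS \<le> num_occ A n w - k" .
      qed
      finally show ?thesis using True by simp
    qed
  qed
  finally show ?thesis .
qed



lemma Fid:
  assumes "1 \<le> k"
  shows "real (t choose k) * sum (cw k) {1..t - k} = (if 1 \<le> t then real ((t - 1) choose k) else 0)"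
proof (cases "k \<le> t")
  case True
  then have t: "1 \<le> t" using assms by simp
  have "sum (cw k) {1..t - k} = real (t - k) / (real k + real (t - k))" by (rule cw_sum[OF assms])
  also have "\<dots> = real (t - k) / real t" using True by simp
  finally have s: "sum (cw k) {1..t - k} = real (t - k) / real t" .
  have eq: "real (t choose k) * real (t - k) = real t * real ((t - 1) choose k)"
    using binomial_absorb_comp[of t k] by (metis of_nat_mult mult.commute)
  have "real (t choose k) * sum (cw k) {1..t - k} = real (t choose k) * real (t - k) / real t"
    unfolding s by simp
  also have "\<dots> = real t * real ((t - 1) choose k) / real t" unfolding eq ..
  also have "\<dots> = real ((t - 1) choose k)" using t by simp
  finally show ?thesis using t by simp
next
  case False
  then show ?thesis by auto
qed

lemma alt_pt:
  "(\<Sum>j=1..k. (-1) ^ (j + 1) * real (m choose j))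
    = (if 1 \<le> m then 1 else 0) - (-1) ^ k * (if 1 \<le> m then real ((m - 1) choose k) else (0::real))"
proof (cases "1 \<le> m")
  case True then show ?thesis using alt_sum[OF True] by simp
next
  case False
  then have "m = 0" by simp
  then show ?thesis by (simp add: sum.neutral)
qed

theorem theorem5:
  fixes M :: "'a measure" and A :: "nat \<Rightarrow> 'a set" and n k :: nat
  assumes "prob_space M"
    and "\<forall>i\<in>{1..n}. A i \<in> sets M"
    and "1 \<le> k" and "k < n"
  shows "(even k \<longrightarrow>
            measure M {w\<in>space M. num_occ A n w \<ge> 1}
              \<ge> (\<Sum>j=1..k. (-1) ^ (j + 1) * S_sum M A n j) + V_val M A n k)
       \<and> (odd k \<longrightarrow>
            measure M {w\<in>space M. num_occ A n w \<ge> 1}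
              \<le> (\<Sum>j=1..k. (-1) ^ (j + 1) * S_sum M A n j) - V_val M A n k)"
proof -
  note PS = assms(1) and As = assms(2) and k1 = assms(3)
  interpret prob_space M by fact
  define ind1 where "ind1 t = (if 1 \<le> t then 1 else (0::real))" for t :: nat
  define F0 where "F0 t = (if 1 \<le> t then real ((t - 1) choose k) else (0::real))" for t :: nat
  define X where "X = {w\<in>space M. num_occ A n w \<ge> 1}"
  have "X = (\<lambda>w. num_occ A n w) -` {1..} \<inter> space M" unfolding X_def by auto
  also have "\<dots> \<in> sets M" by (rule measurable_sets[OF meas_m[OF As]]) simp
  finally have Xs: "X \<in> sets M" .
  have "X \<inter> space M = X" using Xs sets.Int_space_eq2 by blast
  then have "measure M X = integral\<^sup>L M (indicator X)"
    by (simp only: Bochner_Integration.integral_indicator)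
  also have "\<dots> = integral\<^sup>L M (\<lambda>w. ind1 (num_occ A n w))"
    by (rule Bochner_Integration.integral_cong[OF refl]) (simp add: X_def ind1_def indicator_def)
  finally have PX: "measure M X = integral\<^sup>L M (\<lambda>w. ind1 (num_occ A n w))" .
  let ?Sg = "\<Sum>j=1..k. (-1) ^ (j + 1) * S_sum M A n j"
  have "?Sg = (\<Sum>j=1..k. integral\<^sup>L M (\<lambda>w. (-1) ^ (j + 1) * real (num_occ A n w choose j)))"
    by (rule sum.cong[OF refl]) (simp add: S_int[OF PS As])
  also have "\<dots> = integral\<^sup>L M (\<lambda>w. \<Sum>j=1..k. (-1) ^ (j + 1) * real (num_occ A n w choose j))"
    by (rule Bochner_Integration.integral_sum[symmetric, where I="{1..k}" and
          f="\<lambda>j w. (-1) ^ (j + 1) * real (num_occ A n w choose j)"])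
       (rule integrable_g[OF PS As])
  also have "\<dots> = integral\<^sup>L M (\<lambda>w. ind1 (num_occ A n w) - (-1) ^ k * F0 (num_occ A n w))"
    by (rule Bochner_Integration.integral_cong[OF refl]) (simp only: alt_pt ind1_def F0_def)
  also have "\<dots> = integral\<^sup>L M (\<lambda>w. ind1 (num_occ A n w)) - (-1) ^ k * integral\<^sup>L M (\<lambda>w. F0 (num_occ A n w))"
    using integrable_g[OF PS As, of ind1] integrable_g[OF PS As, of F0]
    by simp
  finally have Sg: "?Sg = measure M X - (-1) ^ k * integral\<^sup>L M (\<lambda>w. F0 (num_occ A n w))"
    using PX by simp
  let ?Rs = "{R. R \<subseteq> {1..n} \<and> card R = k}"
  have Rsets: "inter_ev A R \<in> sets M" if "R \<in> ?Rs" for R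
  proof -
    have "R \<subseteq> {1..n}" "R \<noteq> {}" using that k1 by auto
    then show ?thesis by (rule ev_sets[OF As])
  qed
  have "V_val M A n k = (\<Sum>R\<in>?Rs. \<Sum>s=1..n-k. W_val M A n R s * cw k s)"
    unfolding V_val_def cw_def ..
  also have "\<dots> \<le> (\<Sum>R\<in>?Rs. integral\<^sup>L M (\<lambda>w. indicator (inter_ev A R) w * sum (cw k) {1..num_occ A n w - k}))"
    by (rule sum_mono) (rule R_bound[OF PS As k1], auto)
  also have "\<dots> = integral\<^sup>L M (\<lambda>w. \<Sum>R\<in>?Rs. indicator (inter_ev A R) w * sum (cw k) {1..num_occ A n w - k})"
    by (rule Bochner_Integration.integral_sum[symmetric, where I="?Rs" and
          f="\<lambda>R w. indicator (inter_ev A R) w * sum (cw k) {1..num_occ A n w - k}"])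
       (rule integrable_ig[OF PS As Rsets])
  also have "\<dots> = integral\<^sup>L M (\<lambda>w. F0 (num_occ A n w))"
  proof (rule Bochner_Integration.integral_cong[OF refl])
    fix w
    show "(\<Sum>R\<in>?Rs. indicator (inter_ev A R) w * sum (cw k) {1..num_occ A n w - k}) = F0 (num_occ A n w)"
      unfolding sum_ind[OF As k1] F0_def by (rule Fid[OF k1])
  qed
  finally have V: "V_val M A n k \<le> integral\<^sup>L M (\<lambda>w. F0 (num_occ A n w))" .
  show ?thesis
  proof (intro conjI impI)
    assume "even k"
    then show "measure M {w\<in>space M. num_occ A n w \<ge> 1} \<ge> ?Sg + V_val M A n k"
      using Sg V unfolding X_def by simp
  next
    assume "odd k"
    then show "measure M {w\<in>space M. num_occ A n w \<ge> 1} \<le> ?Sg - V_val M A n k"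
      using Sg V unfolding X_def by simp
  qed
qed

end
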